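(* Let $p>p_0\geq 1$ be integers and let $f_n\in C[0,1]^p$. Define $\beta_0\in\mathbb{R}$ and $\boldsymbol{\beta}=(\beta_1,\ldots,\beta_p)'\in\mathbb{R}^p$ (the best linear approximation of $f_n$) by $$\beta_0+\boldsymbol{\beta}'\mathbf{x}=\mathop{\arg\min}_{g\in\{\phi_0+\boldsymbol{\phi}'\mathbf{x}:\ \phi_0\in\mathbb{R},\ \boldsymbol{\phi}\in\mathbb{R}^p\}}\int_{[0,1]^p}\left[f_n(\mathbf{x})-g(\mathbf{x})\right]^2d\mathbf{x}.$$ Suppose there exist $\widetilde{f}_n\in C[0,1]^{p_0}$ and $\eta_n>0$ such that $$\sup_{(x_1,\ldots,x_p)'\in[0,1]^p}\left|f_n(x_1,\ldots,x_p)-\widetilde{f}_n(x_1,\ldots,x_{p_0})\right|<\eta_n,$$ and a positive constant $\tau$ such that for each $j=1,\ldots,p_0$, $$\left|\int_{[0,1]^p}x_jf_n(\mathbf{x})d\mathbf{x}-\frac12\int_{[0,1]^p}f_n(\mathbf{x})d\mathbf{x}\right|>\tau.$$ Then $|\beta_j|<12\eta_n$ for $j=p_0+1,\ldots,p$, and $|\beta_j|>12\tau$ for $j=1,\ldots,p_0$.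
   Context: $\mathbf{x}=(x_1,\ldots,x_p)'$ and $C[0,1]^d$ denotes the continuous real functions on $[0,1]^d$. *)

theory Defs
  imports "HOL-Analysis.Analysis" "HOL-Probability.Probability"
begin

text \<open>Points of [0,1]^p are represented as extensional functions nat \<Rightarrow> real
  with coordinates indexed by 1..p (undefined outside).\<close>

definition unit_cube :: "nat \<Rightarrow> (nat \<Rightarrow> real) set" where
  "unit_cube p = PiE {1..p} (\<lambda>_. {0..1})"

definition cube_measure :: "nat \<Rightarrow> (nat \<Rightarrow> real) measure" where
  "cube_measure p = PiM {1..p} (\<lambda>_. restrict_space lborel {0..1})"

definition cube_integral :: "nat \<Rightarrow> ((nat \<Rightarrow> real) \<Rightarrow> real) \<Rightarrow> real" where
  "cube_integral p g = integral\<^sup>L (cube_measure p) g"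

definition best_linear_approx ::
  "nat \<Rightarrow> ((nat \<Rightarrow> real) \<Rightarrow> real) \<Rightarrow> real \<Rightarrow> (nat \<Rightarrow> real) \<Rightarrow> bool" where
  "best_linear_approx p f b0 b \<longleftrightarrow>
     (\<forall>phi0 phi.
        cube_integral p (\<lambda>x. (f x - (b0 + (\<Sum>j=1..p. b j * x j)))\<^sup>2)
        \<le> cube_integral p (\<lambda>x. (f x - (phi0 + (\<Sum>j=1..p. phi j * x j)))\<^sup>2))"

end

theory Submission
  imports Defs
begin


abbreviation "I01 \<equiv> restrict_space lborel {0..1::real}"

lemma prob_I01: "prob_space I01"
  by (intro prob_spaceI) (simp add: emeasure_restrict_space space_restrict_space)

lemma prob_cube: "prob_space (cube_measure n)"
  unfolding cube_measure_def by (intro prob_space_PiM prob_I01)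

lemma space_cube: "space (cube_measure n) = unit_cube n"
  unfolding cube_measure_def unit_cube_def by (simp add: space_PiM space_restrict_space)

lemma unit_cube_UNIV: "unit_cube n = PiE UNIV (\<lambda>i. if i \<in> {1..n} then {0..1} else {undefined})"
  unfolding unit_cube_def by (auto simp: PiE_iff extensional_def split: if_splits)

lemma compact_cube: "compact (unit_cube n)"
proof -
  have "compactin (product_topology (\<lambda>i. euclidean) UNIV) (unit_cube n)"
    unfolding unit_cube_UNIV compactin_PiE by auto
  then show ?thesis by (simp add: euclidean_product_topology)
qed

lemma coord_meas: "(\<lambda>x. x i) \<in> borel_measurable (cube_measure n)"
proof (cases "i \<in> {1..n}")
  case True
  have "(\<lambda>x. x i) \<in> measurable (cube_measure n) I01"
    unfolding cube_measure_def using True by (rule measurable_component_singleton)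
  moreover have "(\<lambda>x. x) \<in> measurable I01 borel"
    by (rule measurable_restrict_space1) (rule measurable_ident_sets[OF sets_lborel])
  ultimately show ?thesis by (rule measurable_compose)
next
  case False
  have u: "\<And>x. x \<in> space (cube_measure n) \<Longrightarrow> x i = undefined"
    using False by (simp add: space_cube unit_cube_def PiE_def extensional_def)
  show ?thesis
    by (subst measurable_cong[OF u]) simp_all
qed

lemma ident_meas: "(\<lambda>x. x) \<in> measurable (cube_measure n) (borel :: (nat \<Rightarrow> real) measure)"
proof -
  have "(\<lambda>x i. x i) \<in> measurable (cube_measure n) (Pi\<^sub>M UNIV (\<lambda>_. borel :: real measure))"
    by (rule measurable_PiM_single') (simp_all add: coord_meas)
  then have "(\<lambda>x. x) \<in> measurable (cube_measure n) (Pi\<^sub>M UNIV (\<lambda>_. borel :: real measure))"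
    by simp
  then show ?thesis
    using measurable_cong_sets[OF refl sets_PiM_equal_borel] by blast
qed

lemma cont_meas:
  assumes "continuous_on (unit_cube n) g"
  shows "g \<in> borel_measurable (cube_measure n)"
proof -
  have "(\<lambda>x. x) \<in> measurable (cube_measure n) (restrict_space borel (unit_cube n))"
    by (rule measurable_restrict_space2) (simp_all add: space_cube ident_meas)
  moreover have "g \<in> borel_measurable (restrict_space borel (unit_cube n))"
    using assms by (rule borel_measurable_continuous_on_restrict)
  ultimately show ?thesis by (rule measurable_compose)
qed

lemma cont_bounded:
  fixes g :: "(nat \<Rightarrow> real) \<Rightarrow> real"
  assumes "continuous_on (unit_cube n) g"
  shows "\<exists>B. \<forall>x\<in>unit_cube n. \<bar>g x\<bar> \<le> B"
proof -
  have "compact (g ` unit_cube n)" using compact_continuous_image[OF assms compact_cube] .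
  then obtain B where "\<forall>y\<in>g ` unit_cube n. norm y \<le> B"
    using compact_imp_bounded bounded_iff by metis
  then show ?thesis by auto
qed

lemma cont_integrable:
  fixes g :: "(nat \<Rightarrow> real) \<Rightarrow> real"
  assumes "continuous_on (unit_cube n) g"
  shows "integrable (cube_measure n) g"
proof -
  interpret prob_space "cube_measure n" by (rule prob_cube)
  obtain B where B: "\<forall>x\<in>unit_cube n. \<bar>g x\<bar> \<le> B" using cont_bounded[OF assms] by blast
  show ?thesis
  proof (rule integrable_const_bound[of _ B])
    show "AE x in cube_measure n. norm (g x) \<le> B"
      by (rule AE_I2) (use B in \<open>simp add: space_cube\<close>)
  qed (rule cont_meas[OF assms])
qed



lemma I01_int:
  assumes F: "\<And>y. (F has_real_derivative q y) (at y)" and c: "continuous_on {0..1} q"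
  shows "(\<integral>y. q y \<partial>I01) = F 1 - F 0"
proof -
  have "(\<integral>y. q y \<partial>I01) = integral\<^sup>L lborel (\<lambda>x. indicator {0..1::real} x *\<^sub>R q x)"
    by (rule integral_restrict_space) simp
  also have "\<dots> = F 1 - F 0"
    by (rule integral_FTC_atLeastAtMost)
       (use F c in \<open>auto simp: has_real_derivative_iff_has_vector_derivative[symmetric] intro: has_field_derivative_at_within\<close>)
  finally show ?thesis .
qed

lemma I1: "(\<integral>y. (y - 1/2) \<partial>I01) = 0"
proof -
  have "(\<integral>y. (y - 1/2) \<partial>I01) = (\<lambda>y::real. y^2/2 - y/2) 1 - (\<lambda>y. y^2/2 - y/2) 0"
    by (rule I01_int) (auto intro!: derivative_eq_intros continuous_intros)
  then show ?thesis by simp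
qed

lemma I2: "(\<integral>y. (y - 1/2)^2 \<partial>I01) = 1/12"
proof -
  have "(\<integral>y. (y - 1/2)^2 \<partial>I01) = (\<lambda>y::real. (y - 1/2)^3/3) 1 - (\<lambda>y. (y - 1/2)^3/3) 0"
    by (rule I01_int) (auto intro!: derivative_eq_intros continuous_intros simp: power2_eq_square)
  then show ?thesis by (simp add: power3_eq_cube)
qed

lemma I3: "(\<integral>y. y * (y - 1/2) \<partial>I01) = 1/12"
proof -
  have "(\<integral>y. y * (y - 1/2) \<partial>I01) = (\<lambda>y::real. y^3/3 - y^2/4) 1 - (\<lambda>y. y^3/3 - y^2/4) 0"
    by (rule I01_int) (auto intro!: derivative_eq_intros continuous_intros simp: power2_eq_square algebra_simps)
  then show ?thesis by simp
qed

lemma cube_split: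
  assumes j: "j \<in> {1..n}" and int: "integrable (cube_measure n) F"
  shows "cube_integral n F = (\<integral>x. (\<integral>y. F (x(j:=y)) \<partial>I01) \<partial>(Pi\<^sub>M ({1..n}-{j}) (\<lambda>_. I01)))"
proof -
  interpret product_sigma_finite "\<lambda>_::nat. I01"
    unfolding product_sigma_finite_def using prob_space_imp_sigma_finite[OF prob_I01] by simp
  have e: "{1..n} = insert j ({1..n}-{j})" using j by auto
  show ?thesis
    unfolding cube_integral_def
    using product_integral_insert[of "{1..n}-{j}" j F] int
    unfolding cube_measure_def e[symmetric] by simp
qed

lemma split_zero:
  assumes j: "j \<in> {1..n}" and int: "integrable (cube_measure n) F"
    and F: "\<And>x y. F (x(j:=y)) = c x * (y - 1/2)"
  shows "cube_integral n F = 0"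
  unfolding cube_split[OF j int] F by (simp add: I1)

lemma split_const:
  assumes j: "j \<in> {1..n}" and int: "integrable (cube_measure n) F"
    and F: "\<And>x y. F (x(j:=y)) = q y"
  shows "cube_integral n F = (\<integral>y. q y \<partial>I01)"
proof -
  have "measure (Pi\<^sub>M ({1..n}-{j}) (\<lambda>_. I01)) (space (Pi\<^sub>M ({1..n}-{j}) (\<lambda>_. I01))) = 1"
    by (rule prob_space.prob_space) (intro prob_space_PiM prob_I01)
  then show ?thesis unfolding cube_split[OF j int] F by simp
qed



lemma cont_coord[continuous_intros]: "continuous_on S (\<lambda>x::nat\<Rightarrow>real. x i)"
  by (rule continuous_on_subset[OF continuous_on_product_coordinates]) simp

lemma lin3:
  fixes F G H :: "'a \<Rightarrow> real"
  assumes "integrable M F" "integrable M G" "integrable M H"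
  shows "integral\<^sup>L M (\<lambda>x. F x - c * G x + d * H x) = integral\<^sup>L M F - c * integral\<^sup>L M G + d * integral\<^sup>L M H"
  using assms by simp

lemma key:
  fixes p :: nat and f :: "(nat \<Rightarrow> real) \<Rightarrow> real" and b0 :: real and b :: "nat \<Rightarrow> real"
  assumes cf: "continuous_on (unit_cube p) f"
    and best: "best_linear_approx p f b0 b"
    and j: "j \<in> {1..p}"
  shows "b j = 12 * cube_integral p (\<lambda>x. f x * (x j - 1/2))"
proof -
  let ?E = "cube_integral p"
  define g where "g x = b0 + (\<Sum>k=1..p. b k * x k)" for x :: "nat \<Rightarrow> real"
  define u where "u x = x j - 1/2" for x :: "nat \<Rightarrow> real"
  have cg: "continuous_on (unit_cube p) g" unfolding g_def by (intro continuous_intros)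
  have cu: "continuous_on (unit_cube p) u" unfolding u_def by (intro continuous_intros)
  define A where "A = ?E (\<lambda>x. (f x - g x) * u x)"
  define t where "t = 12 * A"
  have Eu2: "?E (\<lambda>x. u x ^ 2) = 1/12"
    using split_const[OF j cont_integrable, of "\<lambda>x. u x ^ 2" "\<lambda>y. (y - 1/2)^2"] cu I2
    by (simp add: u_def continuous_intros)
  have lin: "(b0 - t/2) + (\<Sum>k=1..p. (b(j := b j + t)) k * x k) = g x + t * u x" for x
  proof -
    have "(\<Sum>k=1..p. (b(j := b j + t)) k * x k) = (\<Sum>k=1..p. b k * x k + (if k = j then t * x k else 0))"
      by (rule sum.cong) (auto simp: algebra_simps)
    also have "\<dots> = (\<Sum>k=1..p. b k * x k) + t * x j"
      using j by (simp add: sum.distrib)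
    finally show ?thesis unfolding g_def u_def by (simp add: algebra_simps)
  qed
  have "\<forall>phi0 phi. ?E (\<lambda>x. (f x - g x)^2) \<le> ?E (\<lambda>x. (f x - (phi0 + (\<Sum>k=1..p. phi k * x k)))^2)"
    using best unfolding best_linear_approx_def g_def by simp
  then have "?E (\<lambda>x. (f x - g x)^2) \<le> ?E (\<lambda>x. (f x - ((b0 - t/2) + (\<Sum>k=1..p. (b(j := b j + t)) k * x k)))^2)"
    by blast
  then have min: "?E (\<lambda>x. (f x - g x)^2) \<le> ?E (\<lambda>x. (f x - (g x + t * u x))^2)"
    unfolding lin .
  have "?E (\<lambda>x. (f x - (g x + t * u x))^2) = ?E (\<lambda>x. (f x - g x)^2 - (2*t) * ((f x - g x) * u x) + (t^2) * (u x ^ 2))"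
    by (rule arg_cong[where f="?E"]) (rule ext, simp add: power2_eq_square algebra_simps)
  also have "\<dots> = ?E (\<lambda>x. (f x - g x)^2) - (2*t) * A + t^2 * ?E (\<lambda>x. u x ^ 2)"
    unfolding cube_integral_def A_def
    by (intro lin3 cont_integrable continuous_intros cf cg cu)
  finally have "?E (\<lambda>x. (f x - g x)^2) \<le> ?E (\<lambda>x. (f x - g x)^2) - (2*t) * A + t^2 * (1/12)"
    using min Eu2 by simp
  then have "0 \<le> - 12 * A^2" by (simp add: t_def power2_eq_square algebra_simps)
  then have A0: "A = 0" by simp
  have Eu: "?E u = 0"
    by (rule split_zero[OF j cont_integrable[OF cu], of "\<lambda>_. 1"]) (simp add: u_def)
  have Exu: "?E (\<lambda>x. x k * u x) = (if k = j then 1/12 else 0)" if k: "k \<in> {1..p}" for k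
  proof (cases "k = j")
    case True
    then show ?thesis
      using split_const[OF j cont_integrable, of "\<lambda>x. x k * u x" "\<lambda>y. y * (y - 1/2)"] cu I3
      by (simp add: u_def continuous_intros)
  next
    case False
    then show ?thesis
      using split_zero[OF j cont_integrable, of "\<lambda>x. x k * u x" "\<lambda>x. x k"] cu
      by (simp add: u_def continuous_intros)
  qed
  have "?E (\<lambda>x. g x * u x) = ?E (\<lambda>x. b0 * u x + (\<Sum>k=1..p. b k * (x k * u x)))"
    unfolding g_def by (rule arg_cong[where f="?E"]) (rule ext, simp only: distrib_right sum_distrib_right mult.assoc)
  also have "\<dots> = b0 * ?E u + (\<Sum>k=1..p. b k * ?E (\<lambda>x. x k * u x))"
  proof -
    have i: "integrable (cube_measure p) (\<lambda>x. x k * u x)" for k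
      by (intro cont_integrable continuous_intros cu)
    show ?thesis unfolding cube_integral_def
      using i cont_integrable[OF cu] by (simp add: integral_sum)
  qed
  also have "\<dots> = (\<Sum>k=1..p. b k * (if k = j then 1/12 else 0))"
    using Exu Eu by simp
  also have "\<dots> = b j / 12"
    using j by (simp add: if_distrib cong: if_cong)
  finally have Egu: "?E (\<lambda>x. g x * u x) = b j / 12" .
  have "A = ?E (\<lambda>x. f x * u x) - ?E (\<lambda>x. g x * u x)"
    unfolding A_def cube_integral_def
    by (simp add: left_diff_distrib cont_integrable continuous_intros cf cg cu)
  then show ?thesis using A0 Egu by (simp add: u_def)
qed

theorem theorem1:
  fixes p p0 :: nat
    and f ft :: "(nat \<Rightarrow> real) \<Rightarrow> real"
    and b0 eta tau :: real and b :: "nat \<Rightarrow> real"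
  assumes "1 \<le> p0" and "p0 < p"
    and "continuous_on (unit_cube p) f"
    and "continuous_on (unit_cube p0) ft"
    and "best_linear_approx p f b0 b"
    and "eta > 0"
    and "(SUP x\<in>unit_cube p. \<bar>f x - ft (restrict x {1..p0})\<bar>) < eta"
    and "tau > 0"
    and "\<forall>j\<in>{1..p0}. \<bar>cube_integral p (\<lambda>x. x j * f x) - cube_integral p f / 2\<bar> > tau"
  shows "(\<forall>j\<in>{p0+1..p}. \<bar>b j\<bar> < 12 * eta) \<and> (\<forall>j\<in>{1..p0}. \<bar>b j\<bar> > 12 * tau)"
proof -
  let ?E = "cube_integral p"
  let ?r = "\<lambda>x::nat\<Rightarrow>real. restrict x {1..p0}"
  have cf: "continuous_on (unit_cube p) f" using assms(3) .
  have rin: "?r x \<in> unit_cube p0" if "x \<in> unit_cube p" for x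
    using that assms(2) by (auto simp: unit_cube_def PiE_iff)
  obtain B1 where B1: "\<forall>x\<in>unit_cube p. \<bar>f x\<bar> \<le> B1" using cont_bounded[OF cf] by blast
  obtain B2 where B2: "\<forall>x\<in>unit_cube p0. \<bar>ft x\<bar> \<le> B2" using cont_bounded[OF assms(4)] by blast
  define S where "S = (SUP x\<in>unit_cube p. \<bar>f x - ft (?r x)\<bar>)"
  have bdd: "bdd_above ((\<lambda>x. \<bar>f x - ft (?r x)\<bar>) ` unit_cube p)"
  proof (rule bdd_aboveI2)
    fix x assume x: "x \<in> unit_cube p"
    have "\<bar>f x\<bar> \<le> B1" "\<bar>ft (?r x)\<bar> \<le> B2" using B1 B2 rin[OF x] x by auto
    then show "\<bar>f x - ft (?r x)\<bar> \<le> B1 + B2" by arith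
  qed
  have Sx: "\<bar>f x - ft (?r x)\<bar> \<le> S" if "x \<in> unit_cube p" for x
    unfolding S_def by (rule cSUP_upper[OF that bdd])
  have Seta: "S < eta" using assms(7) S_def by simp
  show ?thesis
  proof
    show "\<forall>j\<in>{p0+1..p}. \<bar>b j\<bar> < 12 * eta"
    proof
      fix j assume j: "j \<in> {p0+1..p}"
      then have j1: "j \<in> {1..p}" using assms(1) by auto
      define \<phi> where "\<phi> x = (\<lambda>i. if i \<in> {p0<..p} then 0 else x i)" for x :: "nat \<Rightarrow> real"
      define h where "h x = f (\<phi> x)" for x
      have \<phi>in: "\<phi> x \<in> unit_cube p" if "x \<in> unit_cube p" for x
        using that by (auto simp: \<phi>_def unit_cube_def PiE_iff extensional_def)
      have r\<phi>: "?r (\<phi> x) = ?r x" for x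
        by (intro ext) (auto simp: \<phi>_def restrict_def)
      have c\<phi>: "continuous_on (unit_cube p) \<phi>"
      proof (rule continuous_on_coordinatewise_then_product)
        fix i
        show "continuous_on (unit_cube p) (\<lambda>x. \<phi> x i)"
        proof (cases "i \<in> {p0<..p}")
          case True
          then have e: "(\<lambda>x. \<phi> x i) = (\<lambda>x. 0)" by (simp add: \<phi>_def)
          show ?thesis unfolding e by (rule continuous_on_const)
        next
          case False
          then have e: "(\<lambda>x. \<phi> x i) = (\<lambda>x. x i)" by (intro ext) (auto simp: \<phi>_def)
          show ?thesis unfolding e by (rule cont_coord)
        qed
      qed
      have ch: "continuous_on (unit_cube p) h" unfolding h_def
        by (rule continuous_on_compose2[OF cf c\<phi>]) (use \<phi>in in auto)
      have fh: "\<bar>f x - h x\<bar> \<le> 2 * S" if x: "x \<in> unit_cube p" for x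
        using Sx[OF x] Sx[OF \<phi>in[OF x]] unfolding h_def r\<phi> by arith
      have \<phi>j: "\<phi> (x(j:=y)) = \<phi> x" for x y
        using j by (intro ext) (auto simp: \<phi>_def)
      have ih: "integrable (cube_measure p) (\<lambda>x. h x * (x j - 1/2))"
        by (intro cont_integrable continuous_intros ch)
      have Eh: "?E (\<lambda>x. h x * (x j - 1/2)) = 0"
        by (rule split_zero[OF j1 ih, of h]) (simp add: h_def \<phi>j)
      have "?E (\<lambda>x. (f x - h x) * (x j - 1/2)) = ?E (\<lambda>x. f x * (x j - 1/2)) - ?E (\<lambda>x. h x * (x j - 1/2))"
        unfolding cube_integral_def
        by (simp add: left_diff_distrib cont_integrable continuous_intros cf ch)
      then have Ediff: "?E (\<lambda>x. f x * (x j - 1/2)) = ?E (\<lambda>x. (f x - h x) * (x j - 1/2))"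
        using Eh by simp
      have bound: "\<bar>?E (\<lambda>x. (f x - h x) * (x j - 1/2))\<bar> \<le> S"
      proof -
        interpret P: prob_space "cube_measure p" by (rule prob_cube)
        have iF: "integrable (cube_measure p) (\<lambda>x. (f x - h x) * (x j - 1/2))"
          by (intro cont_integrable continuous_intros ch cf)
        have "\<bar>?E (\<lambda>x. (f x - h x) * (x j - 1/2))\<bar> \<le> integral\<^sup>L (cube_measure p) (\<lambda>x. \<bar>(f x - h x) * (x j - 1/2)\<bar>)"
          unfolding cube_integral_def using integral_norm_bound[of "cube_measure p" "\<lambda>x. (f x - h x) * (x j - 1/2)"]
          by simp
        also have "\<dots> \<le> integral\<^sup>L (cube_measure p) (\<lambda>x. S)"
        proof (rule integral_mono)
          show "integrable (cube_measure p) (\<lambda>x. \<bar>(f x - h x) * (x j - 1/2)\<bar>)"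
            using iF by (rule integrable_abs)
          show "integrable (cube_measure p) (\<lambda>x. S)" by simp
          fix x assume "x \<in> space (cube_measure p)"
          then have x: "x \<in> unit_cube p" by (simp add: space_cube)
          then have "x j \<in> {0..1}" using j1 by (auto simp: unit_cube_def PiE_iff)
          then have "\<bar>x j - 1/2\<bar> \<le> 1/2" by (simp only: atLeastAtMost_iff abs_le_iff) linarith
          moreover have "\<bar>f x - h x\<bar> \<le> 2 * S" by (rule fh[OF x])
          ultimately have "\<bar>f x - h x\<bar> * \<bar>x j - 1/2\<bar> \<le> (2 * S) * (1/2)"
            by (intro mult_mono) auto
          then show "\<bar>(f x - h x) * (x j - 1/2)\<bar> \<le> S" by (simp add: abs_mult)
        qed
        also have "\<dots> = S" by (simp add: P.prob_space)
        finally show ?thesis .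
      qed
      have "\<bar>b j\<bar> = 12 * \<bar>?E (\<lambda>x. f x * (x j - 1/2))\<bar>"
        using key[OF cf assms(5) j1] by (simp add: abs_mult)
      also have "\<dots> \<le> 12 * S" using bound Ediff by simp
      also have "\<dots> < 12 * eta" using Seta by simp
      finally show "\<bar>b j\<bar> < 12 * eta" .
    qed
    show "\<forall>j\<in>{1..p0}. \<bar>b j\<bar> > 12 * tau"
    proof
      fix j assume j: "j \<in> {1..p0}"
      then have j1: "j \<in> {1..p}" using assms(2) by auto
      have "?E (\<lambda>x. f x * (x j - 1/2)) = ?E (\<lambda>x. x j * f x - f x / 2)"
        by (rule arg_cong[where f="?E"]) (rule ext, simp add: algebra_simps)
      also have "\<dots> = ?E (\<lambda>x. x j * f x) - ?E f / 2"
        unfolding cube_integral_def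
        by (simp add: cont_integrable continuous_intros cf)
      finally have e: "?E (\<lambda>x. f x * (x j - 1/2)) = ?E (\<lambda>x. x j * f x) - ?E f / 2" .
      have "\<bar>b j\<bar> = 12 * \<bar>?E (\<lambda>x. x j * f x) - ?E f / 2\<bar>"
        using key[OF cf assms(5) j1] e by (simp only: abs_mult)
      then show "\<bar>b j\<bar> > 12 * tau" using assms(9) j by auto
    qed
  qed
qed

end
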